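(* Let $M_3$ be a number such that for any three mutually orthogonal affine planes in $\mathbb{R}^3$ at least one of them meets $\Gamma=\{\gamma(t):t\ge M_3\}$ in at most one point, where $\gamma(t)=(t,t^2,t^3)$, and assume $M_3>0$. Then for any three mutually orthogonal affine planes $H_1,H_2,H_3\subset\mathbb{R}^3$, the set $\Gamma\cap(H_1\cup H_2\cup H_3)$ has at most $6$ points.
   Context: Affine planes are mutually orthogonal if their normal vectors are pairwise orthogonal. *)

theory Defs
  imports "HOL-Analysis.Analysis"
begin

definition gamma :: "real \<Rightarrow> real^3" where
  "gamma t = vector [t, t^2, t^3]"

definition Gamma :: "real \<Rightarrow> (real^3) set" where
  "Gamma M = gamma ` {M..}"

text \<open>The affine plane with normal vector n and offset c: {x. n . x = c} (plane iff n nonzero).\<close>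
definition plane :: "real^3 \<Rightarrow> real \<Rightarrow> (real^3) set" where
  "plane n c = {x. n \<bullet> x = c}"

definition mutually_orthogonal_normals :: "real^3 \<Rightarrow> real^3 \<Rightarrow> real^3 \<Rightarrow> bool" where
  "mutually_orthogonal_normals n1 n2 n3 \<longleftrightarrow>
     n1 \<noteq> 0 \<and> n2 \<noteq> 0 \<and> n3 \<noteq> 0 \<and>
     n1 \<bullet> n2 = 0 \<and> n1 \<bullet> n3 = 0 \<and> n2 \<bullet> n3 = 0"

end

theory Submission
  imports Defs "HOL-Computational_Algebra.Polynomial"
begin

lemma gamma_inner: "n \<bullet> gamma t = n$1*t + n$2*t^2 + n$3*t^3"
  by (simp add: gamma_def inner_vec_def sum_3)

lemma gamma_inj: "inj gamma"
proof (rule injI)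
  fix x y assume "gamma x = gamma y"
  hence "gamma x $ 1 = gamma y $ 1" by simp
  thus "x = y" by (simp add: gamma_def)
qed

lemma inter_eq: "Gamma M \<inter> plane n c = gamma ` {t. t \<ge> M \<and> n$1*t + n$2*t^2 + n$3*t^3 = c}"
  by (auto simp: Gamma_def plane_def gamma_inner)

lemma nz3: "(n::real^3) \<noteq> 0 \<Longrightarrow> n$1 \<noteq> 0 \<or> n$2 \<noteq> 0 \<or> n$3 \<noteq> 0"
  by (auto simp: vec_eq_iff forall_3)

lemma poly_eval: "poly [:-c, a1, a2, a3:] t = a1*t + a2*t^2 + a3*t^3 - (c::real)"
  by (simp add: algebra_simps power2_eq_square power3_eq_cube)

lemma plane_card:
  assumes "n \<noteq> 0"
  shows "finite (Gamma M \<inter> plane n c) \<and> card (Gamma M \<inter> plane n c) \<le> 3"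
proof -
  define p where "p = [:-c, n$1, n$2, n$3:]"
  have pnz: "p \<noteq> 0" using nz3[OF assms] by (auto simp: p_def)
  have sub: "{t. t \<ge> M \<and> n$1*t + n$2*t^2 + n$3*t^3 = c} \<subseteq> {x. poly p x = 0}"
    by (auto simp: p_def algebra_simps power2_eq_square power3_eq_cube)
  have fin: "finite {x. poly p x = 0}" using poly_roots_finite[OF pnz] .
  have "degree p \<le> 3" unfolding p_def by (simp add: degree_pCons_le)
  hence cb: "card {x. poly p x = 0} \<le> 3" using card_poly_roots_bound[OF pnz] by linarith
  have f2: "finite {t. t \<ge> M \<and> n$1*t + n$2*t^2 + n$3*t^3 = c}" using finite_subset[OF sub fin] .
  have "card {t. t \<ge> M \<and> n$1*t + n$2*t^2 + n$3*t^3 = c} \<le> 3"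
    using card_mono[OF fin sub] cb by linarith
  thus ?thesis unfolding inter_eq using f2 card_image[OF inj_on_subset[OF gamma_inj]]
    by auto
qed

lemma vieta:
  fixes a1 a2 a3 c r1 r2 r3 :: real
  assumes d: "r1 \<noteq> r2" "r1 \<noteq> r3" "r2 \<noteq> r3"
    and e: "a1*r1 + a2*r1^2 + a3*r1^3 = c" "a1*r2 + a2*r2^2 + a3*r2^3 = c"
       "a1*r3 + a2*r3^2 + a3*r3^3 = c"
  shows "a2 = -a3*(r1+r2+r3) \<and> a1 = a3*(r1*r2+r1*r3+r2*r3)"
proof -
  have "(r1-r2)*(a3*(r1^2+r1*r2+r2^2) + a2*(r1+r2) + a1) = 0"
    using e by (simp add: algebra_simps power2_eq_square power3_eq_cube)
  hence q12: "a3*(r1^2+r1*r2+r2^2) + a2*(r1+r2) + a1 = 0" using d by simp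
  have "(r1-r3)*(a3*(r1^2+r1*r3+r3^2) + a2*(r1+r3) + a1) = 0"
    using e by (simp add: algebra_simps power2_eq_square power3_eq_cube)
  hence q13: "a3*(r1^2+r1*r3+r3^2) + a2*(r1+r3) + a1 = 0" using d by simp
  have "(r2-r3)*(a3*(r1+r2+r3)+a2) = 0"
    using q12 q13 by (simp add: algebra_simps power2_eq_square)
  hence a2: "a2 = -a3*(r1+r2+r3)" using d by simp
  have "a1 = a3*(r1*r2+r1*r3+r2*r3)"
    using q12 unfolding a2 by (simp add: algebra_simps power2_eq_square)
  with a2 show ?thesis by simp
qed

lemma plane_three:
  assumes "M > 0" "n \<noteq> 0" "card (Gamma M \<inter> plane n c) = 3"
  shows "n$1*n$3 > 0 \<and> n$2*n$3 < 0"
proof -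
  let ?S = "{t. t \<ge> M \<and> n$1*t + n$2*t^2 + n$3*t^3 = c}"
  have "card ?S = 3" using assms(3) unfolding inter_eq
    using card_image[OF inj_on_subset[OF gamma_inj]] by simp
  then obtain r1 r2 r3 where S: "?S = {r1,r2,r3}" and d: "r1 \<noteq> r2" "r2 \<noteq> r3" "r1 \<noteq> r3"
    by (auto simp: card_3_iff)
  have m: "r1 \<in> ?S" "r2 \<in> ?S" "r3 \<in> ?S" using S by auto
  hence pos: "r1 > 0" "r2 > 0" "r3 > 0" using assms(1) by auto
  have v: "n$2 = -n$3*(r1+r2+r3) \<and> n$1 = n$3*(r1*r2+r1*r3+r2*r3)"
    using vieta[of r1 r2 r3 "n$1" "n$2" "n$3" c] m d by auto
  have a3: "n$3 \<noteq> 0"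
  proof
    assume "n$3 = 0"
    with v have "n$1 = 0" "n$2 = 0" by auto
    with \<open>n$3 = 0\<close> nz3[OF assms(2)] show False by auto
  qed
  have e1: "r1+r2+r3 > 0" and e2: "r1*r2+r1*r3+r2*r3 > 0" using pos by (auto intro!: add_pos_pos)
  have s: "n$3*n$3 > 0" using a3 by (metis mult_neg_neg mult_pos_pos linorder_neq_iff)
  have h1: "n$1*n$3 = (n$3*n$3)*(r1*r2+r1*r3+r2*r3)" using v by (simp add: algebra_simps)
  have h2: "n$2*n$3 = -((n$3*n$3)*(r1+r2+r3))" using v by (simp only: conj_commute) (simp add: algebra_simps)
  show ?thesis unfolding h1 h2 using s e1 e2 by (simp add: mult_pos_pos)
qed

lemma not_both:
  fixes a b :: "real^3"
  assumes "a$1*a$3 > 0" "a$2*a$3 < 0" "b$1*b$3 > 0" "b$2*b$3 < 0"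
  shows "a \<bullet> b \<noteq> 0"
proof -
  have ab: "a \<bullet> b = a$1*b$1 + a$2*b$2 + a$3*b$3" by (simp add: inner_vec_def sum_3)
  have p1: "(a$1*b$1)*(a$3*b$3) > 0"
    using mult_pos_pos[OF assms(1) assms(3)] by (simp add: algebra_simps)
  have p2: "(a$2*b$2)*(a$3*b$3) > 0"
    using mult_neg_neg[OF assms(2) assms(4)] by (simp add: algebra_simps)
  show ?thesis
  proof (cases "a$3*b$3 > 0")
    case True
    have l: "\<And>x y::real. x*y>0 \<Longrightarrow> y>0 \<Longrightarrow> x>0" by (auto simp: zero_less_mult_iff)
    from True p1 p2 have "a$1*b$1 > 0" "a$2*b$2 > 0" using l by blast+
    with True ab show ?thesis by simp
  next
    case False
    with p1 have n: "a$3*b$3 < 0" by (cases "a$3*b$3 = 0") (auto simp: not_less less_le)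
    have l: "\<And>x y::real. x*y>0 \<Longrightarrow> y<0 \<Longrightarrow> x<0" by (auto simp: zero_less_mult_iff)
    from n p1 p2 have "a$1*b$1 < 0" "a$2*b$2 < 0" using l by blast+
    with n ab show ?thesis by simp
  qed
qed

theorem mainTheorem5:
  fixes M3 :: real
  assumes hM: "\<And>n1 n2 n3 :: real^3. \<And>c1 c2 c3 :: real.
                 mutually_orthogonal_normals n1 n2 n3 \<Longrightarrow>
                 (\<exists>H\<in>{plane n1 c1, plane n2 c2, plane n3 c3}.
                    finite (Gamma M3 \<inter> H) \<and> card (Gamma M3 \<inter> H) \<le> 1)"
    and hpos: "M3 > 0"
    and orth: "mutually_orthogonal_normals n1 n2 n3"
  shows "finite (Gamma M3 \<inter> (plane n1 c1 \<union> plane n2 c2 \<union> plane n3 c3)) \<and>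
         card (Gamma M3 \<inter> (plane n1 c1 \<union> plane n2 c2 \<union> plane n3 c3)) \<le> 6"
proof -
  let ?A = "Gamma M3 \<inter> plane n1 c1" and ?B = "Gamma M3 \<inter> plane n2 c2"
    and ?C = "Gamma M3 \<inter> plane n3 c3"
  have o: "n1 \<noteq> 0" "n2 \<noteq> 0" "n3 \<noteq> 0" "n1 \<bullet> n2 = 0" "n1 \<bullet> n3 = 0" "n2 \<bullet> n3 = 0"
    using orth by (auto simp: mutually_orthogonal_normals_def)
  have A: "finite ?A" "card ?A \<le> 3" using plane_card[OF o(1)] by auto
  have B: "finite ?B" "card ?B \<le> 3" using plane_card[OF o(2)] by auto
  have C: "finite ?C" "card ?C \<le> 3" using plane_card[OF o(3)] by auto
  have one: "card ?A \<le> 1 \<or> card ?B \<le> 1 \<or> card ?C \<le> 1"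
    using hM[OF orth, of c1 c2 c3] by (auto simp: Int_Un_distrib)
  have nAB: "\<not> (card ?A = 3 \<and> card ?B = 3)"
    using plane_three[OF hpos o(1)] plane_three[OF hpos o(2)] not_both o(4) by blast
  have nAC: "\<not> (card ?A = 3 \<and> card ?C = 3)"
    using plane_three[OF hpos o(1)] plane_three[OF hpos o(3)] not_both o(5) by blast
  have nBC: "\<not> (card ?B = 3 \<and> card ?C = 3)"
    using plane_three[OF hpos o(2)] plane_three[OF hpos o(3)] not_both o(6) by blast
  have eq: "Gamma M3 \<inter> (plane n1 c1 \<union> plane n2 c2 \<union> plane n3 c3) = ?A \<union> ?B \<union> ?C" by auto
  have "card (?A \<union> ?B \<union> ?C) \<le> card (?A \<union> ?B) + card ?C" by (rule card_Un_le)
  also have "\<dots> \<le> card ?A + card ?B + card ?C" using card_Un_le[of ?A ?B] by linarith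
  also have "\<dots> \<le> 6" using A B C one nAB nAC nBC by linarith
  finally show ?thesis unfolding eq using A B C by simp
qed

end
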